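(* For every $\varepsilon>0$ there exists $C_\varepsilon>0$ (independent of $N$) such that for any $A\subset\mathbb{Z}^2$ with $|A|\le|\{p\in\mathbb{Z}^2:|p|\le2k_{\mathrm F}\}|$, $$\hbar^2\sum_{p\in A}e(p)^{-1}\le C_\varepsilon N^\varepsilon.$$
   Context: $N=|B_{\mathrm F}|$ with $B_{\mathrm F}=\{k\in\mathbb{Z}^2:|k|<k_{\mathrm F}\}$, where $k_{\mathrm F}>0$ satisfies $k_{\mathrm F}^2=\frac12(\inf_{p\in\mathbb{Z}^2\setminus B_{\mathrm F}}|p|^2+\sup_{q\in B_{\mathrm F}}|q|^2)$; $\hbar=N^{-1/2}$; $e(p)=\hbar^2||p|^2-k_{\mathrm F}^2|$ for $p\in\mathbb{Z}^2$. *)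

theory Defs
  imports Complex_Main
begin

definition pnorm :: "int \<times> int \<Rightarrow> real" where
  "pnorm p = sqrt (real_of_int ((fst p)\<^sup>2 + (snd p)\<^sup>2))"

definition fermi_ball :: "real \<Rightarrow> (int \<times> int) set" where
  "fermi_ball kF = {k. pnorm k < kF}"

definition admissible_kF :: "real \<Rightarrow> bool" where
  "admissible_kF kF \<longleftrightarrow> kF > 0 \<and>
     kF\<^sup>2 = (Inf ((\<lambda>p. (pnorm p)\<^sup>2) ` (- fermi_ball kF))
             + Sup ((\<lambda>q. (pnorm q)\<^sup>2) ` fermi_ball kF)) / 2"

definition NF :: "real \<Rightarrow> nat" where
  "NF kF = card (fermi_ball kF)"

definition hbar :: "real \<Rightarrow> real" where
  "hbar kF = real (NF kF) powr (-1/2)"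

definition e_kin :: "real \<Rightarrow> int \<times> int \<Rightarrow> real" where
  "e_kin kF p = (hbar kF)\<^sup>2 * \<bar>(pnorm p)\<^sup>2 - kF\<^sup>2\<bar>"

end

theory Submission
  imports Defs "HOL-Computational_Algebra.Primes"
begin

definition dcount :: "nat \<Rightarrow> nat" where
  "dcount n = card {e. e dvd n}"

lemma dcount_mult: assumes "a > 0" "b > 0" shows "dcount (a*b) \<le> dcount a * dcount b"
proof -
  have "{e. e dvd a*b} \<subseteq> (\<lambda>(x,y). x*y) ` ({x. x dvd a} \<times> {y. y dvd b})"
  proof
    fix e assume "e \<in> {e. e dvd a*b}"
    then obtain x y where "e = x*y" "x dvd a" "y dvd b" by (auto elim: dvd_productE)
    then show "e \<in> (\<lambda>(x,y). x*y) ` ({x. x dvd a} \<times> {y. y dvd b})" by force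
  qed
  then have "card {e. e dvd a*b} \<le> card ((\<lambda>(x,y). x*y) ` ({x. x dvd a} \<times> {y. y dvd b}))"
    using assms by (intro card_mono) auto
  also have "\<dots> \<le> card ({x. x dvd a} \<times> {y. y dvd b})" by (rule card_image_le) (use assms in auto)
  also have "\<dots> = dcount a * dcount b" by (simp add: dcount_def card_cartesian_product)
  finally show ?thesis by (simp add: dcount_def)
qed

lemma dcount_primepow: assumes "prime (p::nat)" shows "dcount (p^k) = k+1"
proof -
  have "{e. e dvd p^k} = (\<lambda>i. p^i) ` {..k}"
  proof
    show "{e. e dvd p^k} \<subseteq> (\<lambda>i. p^i) ` {..k}"
    proof
      fix e assume "e \<in> {e. e dvd p^k}"
      then obtain m where "m \<le> k" "normalize e = p^m" using divides_primepow[OF assms] by auto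
      then show "e \<in> (\<lambda>i. p^i) ` {..k}" by auto
    qed
  next
    show "(\<lambda>i. p^i) ` {..k} \<subseteq> {e. e dvd p^k}" by (auto simp: le_imp_power_dvd)
  qed
  moreover have "inj_on (\<lambda>i. p^i) {..k}"
    using assms by (auto simp: inj_on_def) (metis prime_gt_1_nat power_inject_exp)
  ultimately show ?thesis by (simp add: dcount_def card_image)
qed

lemma dcount_1: "dcount 1 = 1" by (simp add: dcount_def)

lemma divisor_bound_aux:
  fixes \<delta> :: real
  assumes d: "0 < \<delta>" "\<delta> \<le> 1"
  defines "B \<equiv> 1 / (\<delta> * ln 2)"
  defines "P \<equiv> nat \<lceil>2 powr (1/\<delta>)\<rceil>"
  shows "n > 0 \<Longrightarrow> real (dcount n) \<le> B ^ card {p. prime p \<and> p dvd n \<and> p < P} * real n powr \<delta>"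
proof (induction n rule: less_induct)
  case (less n)
  have l2: "ln (2::real) \<le> 1" using ln_le_minus_one[of 2] by simp
  have c1: "0 < \<delta> * ln 2" "\<delta> * ln 2 \<le> 1" using d l2 by (auto simp: mult_le_one)
  hence B1: "B \<ge> 1" unfolding B_def by simp
  show ?case
  proof (cases "n = 1")
    case True
    have e: "{p. prime p \<and> p dvd n \<and> p < P} = {}" using True by auto
    show ?thesis unfolding e using True dcount_1 by simp
  next
    case False
    then obtain q where q: "prime q" "q dvd n" using prime_factor_nat by blast
    then have "\<exists>p\<in>prime_factors n. True" using less.prems by (auto simp: in_prime_factors_iff)
    then obtain p k m where pk: "prime p" "p dvd n" "\<not> p dvd m" "k > 0" "n = p^k * m"
      using divide_out_primepow_ex[of n "\<lambda>_. True"] less.prems by blast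
    have m0: "m > 0" using pk less.prems by (auto intro: Nat.gr0I)
    have p2: "p \<ge> 2" using pk prime_ge_2_nat by auto
    have pk1: "p^k > 1" using p2 pk(4) by (metis less_le_trans one_less_numeral_iff one_less_power semiring_norm(76))
    have mn: "m < n" using pk(5) m0 pk1 by simp
    have IH: "real (dcount m) \<le> B ^ card {p. prime p \<and> p dvd m \<and> p < P} * real m powr \<delta>"
      using less.IH[OF mn m0] .
    have dn: "real (dcount n) \<le> real (k+1) * real (dcount m)"
    proof -
      have "dcount n \<le> dcount (p^k) * dcount m" using pk(5) dcount_mult[of "p^k" m] m0 p2 by simp
      then have "dcount n \<le> (k+1) * dcount m" using dcount_primepow[OF pk(1), of k] by simp
      then show ?thesis by (metis of_nat_le_iff of_nat_mult)
    qed
    define S where "S n = {p. prime p \<and> p dvd n \<and> p < P}" for n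
    have Sfin: "finite (S m)" unfolding S_def by auto
    have pS: "p \<notin> S m" using pk(3) by (simp add: S_def)
    have Sn: "S n = (if p < P then insert p (S m) else S m)"
    proof -
      have "\<And>r. prime r \<Longrightarrow> r dvd n \<longleftrightarrow> r = p \<or> r dvd m"
      proof
        fix r :: nat assume r: "prime r" "r dvd n"
        then have "r dvd p^k \<or> r dvd m" using pk(5) prime_dvd_mult_iff by metis
        then show "r = p \<or> r dvd m" using r pk(1) by (metis prime_dvd_power primes_dvd_imp_eq)
      next
        fix r :: nat assume "prime r" "r = p \<or> r dvd m"
        then show "r dvd n" using pk by auto
      qed
      then show ?thesis unfolding S_def using pk(1) by auto
    qed
    have key: "real (k+1) \<le> (if p < P then B else 1) * real p powr (k * \<delta>)"
    proof (cases "p < P")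
      case True
      have "real p powr (k*\<delta>) \<ge> 2 powr (k*\<delta>)" using p2 d by (intro powr_mono2) auto
      moreover have "2 powr (k*\<delta>) = exp (k * (\<delta> * ln 2))" by (simp add: powr_def mult_ac)
      moreover have "exp (k * (\<delta> * ln 2)) \<ge> 1 + k * (\<delta> * ln 2)" by (rule exp_ge_add_one_self)
      ultimately have "real p powr (k*\<delta>) \<ge> 1 + k * (\<delta> * ln 2)" by linarith
      then have "B * real p powr (k*\<delta>) \<ge> B * (1 + k * (\<delta> * ln 2))" using B1 by (intro mult_left_mono) auto
      moreover have "B * (1 + k * (\<delta> * ln 2)) = B + k"
      proof -
        have "\<And>c::real. c > 0 \<Longrightarrow> (1/c)*(1 + k*c) = 1/c + k" by (simp add: field_simps)
        then show ?thesis using c1(1) unfolding B_def by blast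
      qed
      ultimately show ?thesis using True B1 by simp
    next
      case False
      then have "real p \<ge> 2 powr (1/\<delta>)" unfolding P_def by linarith
      then have "real p powr \<delta> \<ge> (2 powr (1/\<delta>)) powr \<delta>" using d by (intro powr_mono2) auto
      also have "(2 powr (1/\<delta>)) powr \<delta> = 2" using d by (simp add: powr_powr)
      finally have "real p powr \<delta> \<ge> 2" .
      then have "(real p powr \<delta>) ^ k \<ge> 2 ^ k" by (intro power_mono) auto
      moreover have "(real p powr \<delta>) ^ k = real p powr (k*\<delta>)"
        using p2 by (simp add: powr_realpow[symmetric] powr_powr mult_ac)
      moreover have "(2::real) ^ k \<ge> k + 1"
      proof -
        have "k + 1 \<le> (2::nat)^k" using less_exp[of k] by (simp add: Suc_le_eq)
        then show ?thesis by (metis of_nat_le_iff of_nat_numeral of_nat_power of_nat_1 of_nat_add)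
      qed
      ultimately show ?thesis using False by simp
    qed
    have npow: "real n powr \<delta> = real p powr (k*\<delta>) * real m powr \<delta>"
      using pk(5) p2 by (simp add: powr_mult powr_realpow[symmetric] powr_powr mult_ac)
    have "real (dcount n) \<le> real (k+1) * (B ^ card (S m) * real m powr \<delta>)"
      using order_trans[OF dn mult_left_mono[OF IH]] unfolding S_def by simp
    also have "\<dots> \<le> ((if p < P then B else 1) * real p powr (k * \<delta>)) * (B ^ card (S m) * real m powr \<delta>)"
      using key B1 by (intro mult_right_mono) auto
    also have "\<dots> = B ^ card (S n) * real n powr \<delta>"
      using Sn Sfin pS npow by (simp add: mult_ac)
    finally show ?thesis unfolding S_def .
  qed
qed

lemma divisor_bound:
  fixes \<delta> :: real
  assumes d: "0 < \<delta>" "\<delta> \<le> 1"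
  shows "\<exists>C\<ge>1. \<forall>n>0. real (dcount n) \<le> C * real n powr \<delta>"
proof -
  define B where "B = 1 / (\<delta> * ln 2)"
  define P where "P = nat \<lceil>2 powr (1/\<delta>)\<rceil>"
  have l2: "ln (2::real) \<le> 1" using ln_le_minus_one[of 2] by simp
  have c1: "0 < \<delta> * ln 2" "\<delta> * ln 2 \<le> 1" using d l2 by (auto simp: mult_le_one)
  hence B1: "B \<ge> 1" unfolding B_def by simp
  show ?thesis
  proof (intro exI[of _ "B^P"] conjI allI impI)
    show "1 \<le> B^P" using B1 by simp
    fix n :: nat assume n: "n > 0"
    have "card {p. prime p \<and> p dvd n \<and> p < P} \<le> card {..<P}" by (intro card_mono) auto
    then have "B ^ card {p. prime p \<and> p dvd n \<and> p < P} \<le> B ^ P" using B1 by (intro power_increasing) auto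
    then show "real (dcount n) \<le> B^P * real n powr \<delta>"
      using divisor_bound_aux[OF d n] unfolding B_def[symmetric] P_def[symmetric]
      by (meson order_trans mult_right_mono powr_ge_zero)
  qed
qed


lemma card_fiber_bound:
  assumes "finite A" "finite B" "f ` A \<subseteq> B" "\<And>b. b \<in> B \<Longrightarrow> card {a\<in>A. f a = b} \<le> k"
  shows "card A \<le> k * card B"
proof -
  have "A = (\<Union>b\<in>B. {a\<in>A. f a = b})" using assms(3) by auto
  then have "card A \<le> (\<Sum>b\<in>B. card {a\<in>A. f a = b})" by (metis card_UN_le assms(2))
  also have "\<dots> \<le> (\<Sum>b\<in>B. k)" by (rule sum_mono) (use assms(4) in auto)
  finally show ?thesis by (simp add: mult.commute)
qed

definition idivs :: "int \<Rightarrow> int set" where "idivs m = {e. 0 < e \<and> e dvd m}"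

lemma idivs_card: assumes "m > 0" shows "card (idivs m) = dcount (nat m)"
proof -
  have "idivs m = int ` {e. e dvd nat m}"
  proof
    show "idivs m \<subseteq> int ` {e. e dvd nat m}"
    proof
      fix e assume "e \<in> idivs m"
      then have "0 < e" "e dvd m" by (auto simp: idivs_def)
      then have "nat e dvd nat m" using assms by (simp add: nat_dvd_iff)
      then show "e \<in> int ` {e. e dvd nat m}" using \<open>0 < e\<close> by (auto intro: image_eqI[of _ _ "nat e"])
    qed
  next
    show "int ` {e. e dvd nat m} \<subseteq> idivs m"
    proof
      fix x assume "x \<in> int ` {e. e dvd nat m}"
      then obtain e where e: "x = int e" "e dvd nat m" by blast
      have "0 < e" using e assms by (cases "e = 0") auto
      moreover have "int e dvd int (nat m)" using e(2) by (simp only: of_nat_dvd_iff)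
      ultimately show "x \<in> idivs m" using e assms by (simp add: idivs_def gr0I)
    qed
  qed
  then show ?thesis by (simp add: dcount_def card_image)
qed

lemma idivs_finite: "m > 0 \<Longrightarrow> finite (idivs m)"
proof -
  assume "m > 0"
  then have "idivs m \<subseteq> {0..m}" by (auto simp: idivs_def zdvd_imp_le)
  then show ?thesis by (rule finite_subset) auto
qed

lemma dvd_gcd_prod: fixes m a b :: int assumes "m dvd a*b" shows "m dvd gcd a m * gcd b m"
  using assms by (metis division_decomp dvd_triv_right gcd_greatest mult.commute mult_dvd_mono)

definition roots :: "int \<Rightarrow> int set" where "roots m = {t. 0 \<le> t \<and> t < m \<and> m dvd t^2 + 1}"

lemma key_div:
  fixes m t t0 t1 :: int
  assumes m: "m > 0" and r0: "m dvd t0^2 + 1" and rt: "m dvd t^2 + 1" and r1: "m dvd t1^2 + 1"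
    and e1: "gcd (t - t0) m = gcd (t1 - t0) m" and e2: "gcd (t + t0) m = gcd (t1 + t0) m"
  shows "m dvd 2 * (t - t1)"
proof -
  define d1 where "d1 = gcd (t - t0) m"
  define d2 where "d2 = gcd (t + t0) m"
  have cop: "coprime t0 m" using r0
    by (metis coprime_add_one_right coprime_divisors dvdI power2_eq_square)
  have mab: "m dvd (t - t0) * (t + t0)"
  proof -
    have "(t - t0) * (t + t0) = (t^2 + 1) - (t0^2 + 1)" by (simp add: power2_eq_square algebra_simps)
    moreover have "m dvd (t^2 + 1) - (t0^2 + 1)" using rt r0 by (rule dvd_diff)
    ultimately show ?thesis by simp
  qed
  have m12: "m dvd d1 * d2" unfolding d1_def d2_def by (rule dvd_gcd_prod[OF mab])
  have d1p: "d1 > 0" "d2 > 0" unfolding d1_def d2_def using m by auto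
  have g2: "gcd d1 d2 dvd 2"
  proof -
    have "gcd d1 d2 dvd (t + t0) - (t - t0)" unfolding d1_def d2_def
      by (meson dvd_diff gcd_dvd1 gcd_dvd2 dvd_trans)
    then have a: "gcd d1 d2 dvd 2 * t0" by simp
    have b: "gcd d1 d2 dvd m" unfolding d1_def by (meson gcd_dvd1 gcd_dvd2 dvd_trans)
    have "coprime (gcd d1 d2) t0" using cop b coprime_divisors by (metis coprime_commute dvd_refl)
    then show ?thesis using a coprime_dvd_mult_left_iff by blast
  qed
  have l: "lcm d1 d2 dvd t - t1"
  proof (rule lcm_least)
    show "d1 dvd t - t1" using e1 unfolding d1_def
      by (smt (verit, best) dvd_diff_right_iff gcd_dvd1)
    show "d2 dvd t - t1" using e2 unfolding d2_def
      by (smt (verit, best) dvd_diff_right_iff gcd_dvd1)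
  qed
  have "d1 * d2 = gcd d1 d2 * lcm d1 d2" using d1p by simp
  also have "\<dots> dvd 2 * (t - t1)" using g2 l by (rule mult_dvd_mono)
  finally show ?thesis using m12 by (meson dvd_trans)
qed

lemma roots_finite: "finite (roots m)"
  unfolding roots_def by (rule finite_subset[of _ "{0..m}"]) auto

lemma roots_bound: assumes m: "m > 0" shows "card (roots m) \<le> 3 * card (idivs m)^2"
proof (cases "roots m = {}")
  case True then show ?thesis by simp
next
  case False
  then obtain t0 where t0: "t0 \<in> roots m" by blast
  define f where "f t = (gcd (t - t0) m, gcd (t + t0) m)" for t
  have "card (roots m) \<le> 3 * card (idivs m \<times> idivs m)"
  proof (rule card_fiber_bound[of _ _ f])
    show "finite (roots m)" by (rule roots_finite)
    show "finite (idivs m \<times> idivs m)" using idivs_finite[OF m] by simp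
    show "f ` roots m \<subseteq> idivs m \<times> idivs m" using m by (auto simp: f_def idivs_def)
    fix b assume "b \<in> idivs m \<times> idivs m"
    show "card {a \<in> roots m. f a = b} \<le> 3"
    proof (cases "{a \<in> roots m. f a = b} = {}")
      case True show ?thesis unfolding True by simp
    next
      case False
      then obtain t1 where t1: "t1 \<in> roots m" "f t1 = b" by blast
      have "{a \<in> roots m. f a = b} \<subseteq> {t1, t1 + m div 2, t1 - m div 2}"
      proof
        fix t assume "t \<in> {a \<in> roots m. f a = b}"
        then have t: "t \<in> roots m" "f t = f t1" using t1 by auto
        have "m dvd 2 * (t - t1)"
          by (rule key_div[OF m, of t0 t t1]) (use t t1 t0 in \<open>auto simp: roots_def f_def\<close>)
        then obtain j where j: "2 * (t - t1) = m * j" by blast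
        have "\<bar>t - t1\<bar> < m" using t(1) t1(1) by (auto simp: roots_def)
        then have "\<bar>m * j\<bar> < 2 * m" using j by (metis abs_mult abs_of_pos mult_less_cancel_left_pos zero_less_numeral abs_numeral)
        then have "\<bar>j\<bar> < 2" using m by (simp add: abs_mult)
        then have "j = 0 \<or> j = 1 \<or> j = -1" by auto
        then show "t \<in> {t1, t1 + m div 2, t1 - m div 2}"
        proof (elim disjE)
          assume "j = 0" then show ?thesis using j by simp
        next
          assume "j = 1" then have "2 * (t - t1) = m" using j by simp
          then have "t - t1 = m div 2" by presburger
          then show ?thesis by simp
        next
          assume "j = -1" then have "2 * (t1 - t) = m" using j by simp
          then have "t1 - t = m div 2" by presburger
          then show ?thesis by simp
        qed
      qed
      then have "card {a \<in> roots m. f a = b} \<le> card {t1, t1 + m div 2, t1 - m div 2}"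
        by (intro card_mono) auto
      also have "\<dots> \<le> 3" by (simp add: card_insert_if)
      finally show ?thesis .
    qed
  qed
  then show ?thesis by (simp add: card_cartesian_product power2_eq_square)
qed


lemma sq1_cases: fixes a b :: int assumes "a^2 + b^2 = 1"
  shows "(a,b) \<in> {(1,0),(-1,0),(0,1),(0,-1)}"
proof -
  have "a^2 \<le> 1^2" "b^2 \<le> 1^2" using assms by (simp_all add: add_nonneg_eq_0_iff) (smt (verit) zero_le_power2)+
  then have "\<bar>a\<bar> \<le> 1" "\<bar>b\<bar> \<le> 1" using abs_le_square_iff[of a 1] abs_le_square_iff[of b 1] by auto
  then have "a \<in> {-1,0,1}" "b \<in> {-1,0,1}" by auto
  then show ?thesis using assms by auto
qed

lemma root_exists:
  fixes x y m :: int
  assumes m: "m > 0" and xy: "x^2 + y^2 = m" and cop: "coprime x y"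
  shows "\<exists>t. t \<in> roots m \<and> m dvd x - t*y"
proof -
  have "gcd y (y * y + x^2) = gcd y (x^2)" by (rule gcd_add_mult)
  moreover have "coprime y (x^2)" using cop by (simp add: coprime_commute)
  ultimately have "coprime y m" using xy by (simp add: coprime_iff_gcd_eq_1 power2_eq_square add.commute)
  then have g1: "gcd y m = 1" by simp
  define w where "w = fst (bezout_coefficients y m)"
  define s where "s = snd (bezout_coefficients y m)"
  have ws: "w * y + s * m = 1" using bezout_coefficients_fst_snd[of y m] g1 by (simp add: w_def s_def)
  define r where "r = - s"
  have yw: "y * w = 1 + m * r" using ws by (simp add: r_def algebra_simps)
  define t where "t = (x * w) mod m"
  define q where "q = (x * w) div m"
  have tq: "t = x*w - m*q" unfolding t_def q_def by (simp add: minus_div_mult_eq_mod[symmetric] mult.commute)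
  have "t^2 + 1 = m * (w^2 - 2*r - m*r^2 - 2*x*w*q + m*q^2)"
    using tq yw xy[symmetric] by algebra
  then have d1: "m dvd t^2 + 1" by simp
  have "x - t*y = m * (q*y - x*r)" using tq yw by algebra
  then have d2: "m dvd x - t*y" by simp
  have "0 \<le> t" "t < m" using m unfolding t_def by auto
  then show ?thesis using d1 d2 by (auto simp: roots_def)
qed

lemma abs_le_sq: "\<bar>x::int\<bar> \<le> x^2"
proof (cases "x = 0")
  case False
  then have "1 \<le> \<bar>x\<bar>" by linarith
  then have "\<bar>x\<bar> * 1 \<le> \<bar>x\<bar> * \<bar>x\<bar>" by (intro mult_left_mono) auto
  then show ?thesis by (simp add: power2_eq_square abs_mult[symmetric])
qed simp

definition S2 :: "int \<Rightarrow> (int \<times> int) set" where "S2 n = {(x,y). x^2 + y^2 = n}"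

lemma S2_finite: "finite (S2 n)"
proof -
  have "S2 n \<subseteq> {-\<bar>n\<bar>..\<bar>n\<bar>} \<times> {-\<bar>n\<bar>..\<bar>n\<bar>}"
  proof
    fix p assume "p \<in> S2 n"
    then obtain x y where p: "p = (x,y)" "x^2 + y^2 = n" by (auto simp: S2_def)
    have "\<bar>x\<bar> \<le> x^2" "\<bar>y\<bar> \<le> y^2" using abs_le_sq by auto
    then show "p \<in> {-\<bar>n\<bar>..\<bar>n\<bar>} \<times> {-\<bar>n\<bar>..\<bar>n\<bar>}" using p by auto
  qed
  then show ?thesis by (rule finite_subset) auto
qed

lemma prim_decomp:
  fixes x y n :: int
  assumes n: "n > 0" and xy: "x^2 + y^2 = n"
  defines "g \<equiv> gcd x y"
  shows "g > 0" "x = g * (x div g)" "y = g * (y div g)" "coprime (x div g) (y div g)"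
        "(x div g)^2 + (y div g)^2 = n div g^2" "n div g^2 > 0" "g^2 dvd n" "g \<in> idivs n"
proof -
  have nz: "x \<noteq> 0 \<or> y \<noteq> 0" using n xy by auto
  then show g0: "g > 0" unfolding g_def by simp
  show x: "x = g * (x div g)" unfolding g_def by simp
  show y: "y = g * (y div g)" unfolding g_def by simp
  show "coprime (x div g) (y div g)" unfolding g_def using div_gcd_coprime nz by blast
  have ne: "n = g^2 * ((x div g)^2 + (y div g)^2)"
    using xy x y by (metis power_mult_distrib distrib_left)
  then show "(x div g)^2 + (y div g)^2 = n div g^2" using g0 by simp
  then show "n div g^2 > 0" using ne n g0 by (metis zero_less_mult_pos zero_less_power)
  show g2: "g^2 dvd n" using ne by simp
  have "g dvd n" using g2 by (metis dvd_mult_left power2_eq_square)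
  then show "g \<in> idivs n" using g0 by (simp add: idivs_def)
qed

lemma r2_bound: assumes n: "n > 0" shows "card (S2 n) \<le> 12 * card (idivs n)^3"
proof -
  define G where "G p = gcd (fst p) (snd p)" for p :: "int \<times> int"
  define M where "M p = n div (G p)^2" for p
  define xr where "xr p = fst p div G p" for p
  define yr where "yr p = snd p div G p" for p
  define T where "T p = (SOME t. t \<in> roots (M p) \<and> M p dvd xr p - t * yr p)" for p
  define F where "F p = (G p, T p)" for p
  define B where "B = Sigma {g \<in> idivs n. g^2 dvd n} (\<lambda>g. roots (n div g^2))"
  have facts: "G p > 0 \<and> fst p = G p * xr p \<and> snd p = G p * yr p \<and> coprime (xr p) (yr p) \<and>
        (xr p)^2 + (yr p)^2 = M p \<and> M p > 0 \<and> (G p)^2 dvd n \<and> G p \<in> idivs n" if "p \<in> S2 n" for p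
  proof -
    obtain x y where p: "p = (x,y)" "x^2 + y^2 = n" using \<open>p \<in> S2 n\<close> by (auto simp: S2_def)
    show ?thesis using prim_decomp[OF n p(2)] unfolding p(1) G_def M_def xr_def yr_def by simp
  qed
  have Tp: "T p \<in> roots (M p) \<and> M p dvd xr p - T p * yr p" if "p \<in> S2 n" for p
  proof -
    have f: "M p > 0" "(xr p)^2 + (yr p)^2 = M p" "coprime (xr p) (yr p)" using facts[OF that] by auto
    have "\<exists>t. t \<in> roots (M p) \<and> M p dvd xr p - t * yr p" by (rule root_exists[OF f])
    then show ?thesis unfolding T_def by (rule someI_ex)
  qed
  have Bfin: "finite B" unfolding B_def using idivs_finite[OF n] roots_finite by auto
  have "card (S2 n) \<le> 4 * card B"
  proof (rule card_fiber_bound[of _ _ F])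
    show "finite (S2 n)" by (rule S2_finite)
    show "finite B" by (rule Bfin)
    show "F ` S2 n \<subseteq> B" using facts Tp unfolding B_def F_def M_def by auto
    fix b assume "b \<in> B"
    show "card {a \<in> S2 n. F a = b} \<le> 4"
    proof (cases "{a \<in> S2 n. F a = b} = {}")
      case True show ?thesis unfolding True by simp
    next
      case False
      then obtain p1 where p1: "p1 \<in> S2 n" "F p1 = b" by blast
      define x1 where "x1 = xr p1"
      define y1 where "y1 = yr p1"
      define g where "g = G p1"
      define m where "m = M p1"
      define t where "t = T p1"
      define h where "h = (\<lambda>(a::int,c::int). (g*(x1*a - y1*c), g*(y1*a + x1*c)))"
      have "{a \<in> S2 n. F a = b} \<subseteq> h ` {(1,0),(-1,0),(0,1),(0,-1)}"
      proof
        fix p2 assume "p2 \<in> {a \<in> S2 n. F a = b}"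
        then have p2: "p2 \<in> S2 n" "F p2 = F p1" using p1 by auto
        then have Gp: "G p2 = g" "T p2 = t" unfolding F_def g_def t_def by auto
        then have Mp: "M p2 = m" unfolding M_def m_def g_def by simp
        define x2 where "x2 = xr p2"
        define y2 where "y2 = yr p2"
        have f1: "x1^2 + y1^2 = m" "m > 0" "m dvd x1 - t*y1" "m dvd t^2 + 1"
          using facts[OF p1(1)] Tp[OF p1(1)] unfolding x1_def y1_def m_def t_def roots_def by auto
        have f2: "x2^2 + y2^2 = m" "m dvd x2 - t*y2" "p2 = (g*x2, g*y2)"
          using facts[OF p2(1)] Tp[OF p2(1)] Gp Mp unfolding x2_def y2_def
          by (auto simp: prod_eq_iff)
        obtain k1 where k1: "x1 - t*y1 = m*k1" using f1(3) by blast
        obtain k2 where k2: "x2 - t*y2 = m*k2" using f2(2) by blast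
        obtain s where s: "t^2 + 1 = m*s" using f1(4) by blast
        define u where "u = x1*x2 + y1*y2"
        define v where "v = x1*y2 - x2*y1"
        have "u = m * (s*y1*y2 + k1*t*y2 + t*y1*k2 + m*k1*k2)"
        proof -
          have "x1 = t*y1 + m*k1" "x2 = t*y2 + m*k2" using k1 k2 by simp_all
          then show ?thesis unfolding u_def using s by algebra
        qed
        then obtain a where a: "u = m*a" by blast
        have "v = m * (k1*y2 - k2*y1)"
        proof -
          have "x1 = t*y1 + m*k1" "x2 = t*y2 + m*k2" using k1 k2 by simp_all
          then show ?thesis unfolding v_def by algebra
        qed
        then obtain c where c: "v = m*c" by blast
        have "u^2 + v^2 = (x1^2+y1^2)*(x2^2+y2^2)" unfolding u_def v_def by (simp add: power2_eq_square algebra_simps)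
        then have "u^2 + v^2 = m^2" using f1(1) f2(1) by (simp add: power2_eq_square)
        then have "m^2 * (a^2 + c^2) = m^2 * 1" using a c by (simp add: power_mult_distrib algebra_simps)
        then have ac: "a^2 + c^2 = 1" using f1(2) by simp
        have "m * x2 = m * (x1*a - y1*c)"
        proof -
          have "x1*u - y1*v = (x1^2+y1^2)*x2" by (simp add: u_def v_def power2_eq_square algebra_simps)
          then have "m * x2 = x1*u - y1*v" using f1(1) by simp
          then show ?thesis using a c by (simp add: algebra_simps)
        qed
        then have ex2: "x2 = x1*a - y1*c" using f1(2) by simp
        have "m * y2 = m * (y1*a + x1*c)"
        proof -
          have "y1*u + x1*v = (x1^2+y1^2)*y2" by (simp add: u_def v_def power2_eq_square algebra_simps)
          then have "m * y2 = y1*u + x1*v" using f1(1) by simp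
          then show ?thesis using a c by (simp add: algebra_simps)
        qed
        then have ey2: "y2 = y1*a + x1*c" using f1(2) by simp
        have "p2 = h (a,c)" unfolding h_def using f2(3) ex2 ey2 by simp
        moreover have "(a,c) \<in> {(1,0),(-1,0),(0,1),(0,-1)}" by (rule sq1_cases[OF ac])
        ultimately show "p2 \<in> h ` {(1,0),(-1,0),(0,1),(0,-1)}" by blast
      qed
      then have "card {a \<in> S2 n. F a = b} \<le> card (h ` {(1,0),(-1,0),(0,1),(0,-1)})"
        by (intro card_mono) auto
      also have "\<dots> \<le> card {(1::int,0::int),(-1,0),(0,1),(0,-1)}" by (rule card_image_le) simp
      also have "\<dots> \<le> 4" by (simp add: card_insert_if)
      finally show ?thesis .
    qed
  qed
  also have "card B \<le> 3 * card (idivs n)^3"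
  proof -
    have "card B = (\<Sum>g\<in>{g \<in> idivs n. g^2 dvd n}. card (roots (n div g^2)))"
      unfolding B_def using idivs_finite[OF n] roots_finite by (intro card_SigmaI) auto
    also have "\<dots> \<le> (\<Sum>g\<in>{g \<in> idivs n. g^2 dvd n}. 3 * card (idivs n)^2)"
    proof (rule sum_mono)
      fix g assume g: "g \<in> {g \<in> idivs n. g^2 dvd n}"
      show "card (roots (n div g^2)) \<le> 3 * card (idivs n)^2"
      proof (cases "n div g^2 > 0")
        case True
        have "idivs (n div g^2) \<subseteq> idivs n"
        proof
          fix e assume "e \<in> idivs (n div g^2)"
          then have "0 < e" "e dvd n div g^2" by (auto simp: idivs_def)
          moreover have "n div g^2 dvd n" using g by (metis dvd_div_mult_self dvd_triv_left mem_Collect_eq)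
          ultimately show "e \<in> idivs n" by (auto simp: idivs_def intro: dvd_trans)
        qed
        then have "card (idivs (n div g^2)) \<le> card (idivs n)" using idivs_finite[OF n] by (rule card_mono[rotated])
        then have "card (idivs (n div g^2))^2 \<le> card (idivs n)^2" by (rule power_mono) simp
        then show ?thesis using roots_bound[OF True] by linarith
      next
        case False
        then have "roots (n div g^2) = {}" by (auto simp: roots_def)
        then show ?thesis by simp
      qed
    qed
    also have "\<dots> \<le> card (idivs n) * (3 * card (idivs n)^2)"
    proof -
      have "card {g \<in> idivs n. g^2 dvd n} \<le> card (idivs n)" using idivs_finite[OF n] by (intro card_mono) auto
      then show ?thesis by simp
    qed
    finally show ?thesis by (simp add: power3_eq_cube power2_eq_square)
  qed
  finally show ?thesis by simp
qed


lemma r2_asymp: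
  fixes \<delta> :: real assumes d: "0 < \<delta>" "\<delta> \<le> 1"
  shows "\<exists>C\<ge>1. \<forall>n::int. n > 0 \<longrightarrow> real (card (S2 n)) \<le> C * real_of_int n powr \<delta>"
proof -
  obtain C where C: "C \<ge> 1" "\<forall>n>0. real (dcount n) \<le> C * real n powr (\<delta>/3)"
    using divisor_bound[of "\<delta>/3"] d by auto
  show ?thesis
  proof (intro exI[of _ "12 * C^3"] conjI allI impI)
    have "1 \<le> C^3" using C(1) by (rule one_le_power)
    then show "1 \<le> 12 * C^3" by linarith
    fix n :: int assume n: "n > 0"
    have a: "real (card (S2 n)) \<le> 12 * real (card (idivs n))^3"
      using r2_bound[OF n] by (metis of_nat_le_iff of_nat_mult of_nat_numeral of_nat_power)
    have "real (card (idivs n)) = real (dcount (nat n))" using idivs_card[OF n] by simp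
    also have "real (dcount (nat n)) \<le> C * real (nat n) powr (\<delta>/3)" using C(2)[rule_format, of "nat n"] n by simp
    also have "real (nat n) = real_of_int n" using n by simp
    finally have b: "real (card (idivs n)) \<le> C * real_of_int n powr (\<delta>/3)" .
    have "real (card (idivs n))^3 \<le> (C * real_of_int n powr (\<delta>/3))^3" by (rule power_mono[OF b]) simp
    then have "real (card (S2 n)) \<le> 12 * (C * real_of_int n powr (\<delta>/3))^3" using a by linarith
    also have "(C * real_of_int n powr (\<delta>/3))^3 = C^3 * real_of_int n powr \<delta>"
      proof -
      have "(real_of_int n powr (\<delta>/3))^3 = real_of_int n powr (real 3 * (\<delta>/3))"
        using n by (intro powr_power) simp
      then show ?thesis by (simp add: power_mult_distrib)
    qed
    finally show "real (card (S2 n)) \<le> 12 * C^3 * real_of_int n powr \<delta>" by (simp only: mult.assoc)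
  qed
qed

definition H :: "nat \<Rightarrow> real" where "H J = (\<Sum>k\<in>{1..J}. 1 / real k)"

lemma H_ln: "J \<ge> 1 \<Longrightarrow> H J \<le> 1 + ln (real J)"
proof (induction J rule: dec_induct)
  case base then show ?case by (simp add: H_def)
next
  case (step J)
  have J: "real J \<ge> 1" using step by simp
  have "ln (real J / real (Suc J)) \<le> real J / real (Suc J) - 1" by (rule ln_le_minus_one) (use J in simp)
  also have "real J / real (Suc J) - 1 = - 1 / real (Suc J)" by (simp add: field_simps)
  finally have "ln (real J) - ln (real (Suc J)) \<le> - 1 / real (Suc J)" using J by (simp add: ln_div)
  moreover have "H (Suc J) = H J + 1 / real (Suc J)" by (simp add: H_def)
  ultimately show ?case using step.IH by linarith
qed

lemma H_pow: assumes "0 < \<delta>" shows "H J \<le> 1 + real J powr \<delta> / \<delta>"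
proof (cases "J \<ge> 1")
  case True
  have "ln (real J) = ln (real J powr \<delta>) / \<delta>" using True assms by (simp add: ln_powr)
  also have "\<dots> \<le> (real J powr \<delta> - 1) / \<delta>" using assms True
    by (intro divide_right_mono ln_le_minus_one) auto
  also have "\<dots> \<le> real J powr \<delta> / \<delta>" using assms by (intro divide_right_mono) auto
  finally show ?thesis using H_ln[OF True] by linarith
next
  case False then show ?thesis using assms by (simp add: H_def)
qed

definition nsq :: "int \<times> int \<Rightarrow> int" where "nsq p = (fst p)^2 + (snd p)^2"

lemma sum_bound:
  fixes c R :: real and A :: "(int \<times> int) set"
  assumes A: "finite A" and D: "\<And>p. \<bar>real_of_int (nsq p) - c\<bar> \<ge> 1/2"
    and R: "\<And>n::int. real_of_int n \<le> c + real (card A) + 1 \<Longrightarrow> real (card (S2 n)) \<le> R"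
  shows "(\<Sum>p\<in>A. 1 / \<bar>real_of_int (nsq p) - c\<bar>) \<le> 2 + 4 * R * H (card A)"
proof -
  define J where "J = card A"
  define Df where "Df p = \<bar>real_of_int (nsq p) - c\<bar>" for p
  define j where "j p = nat \<lfloor>2 * Df p\<rfloor>" for p
  have fl: "\<lfloor>2 * Df p\<rfloor> \<ge> 1" for p
  proof -
    have h: "\<And>x::real. 1/2 \<le> x \<Longrightarrow> 1 \<le> 2*x" by simp
    have "2 * Df p \<ge> 1" using h[OF D[of p]] unfolding Df_def .
    then show ?thesis by linarith
  qed
  have jr: "real (j p) = real_of_int \<lfloor>2 * Df p\<rfloor>" for p using fl[of p] unfolding j_def by simp
  have j1: "j p \<ge> 1" for p using fl[of p] unfolding j_def by linarith
  have jle: "real (j p) \<le> 2 * Df p" for p unfolding jr by linarith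
  have jgt: "2 * Df p < real (j p) + 1" for p unfolding jr by linarith
  have inv: "1 / Df p \<le> 2 / real (j p)" for p
  proof -
    have "real (j p) > 0" using j1[of p] by simp
    then show ?thesis using jle[of p] by (simp add: field_simps)
  qed
  define A1 where "A1 = {p\<in>A. j p \<le> J}"
  define A2 where "A2 = {p\<in>A. \<not> j p \<le> J}"
  have split: "(\<Sum>p\<in>A. 1 / Df p) = (\<Sum>p\<in>A1. 1 / Df p) + (\<Sum>p\<in>A2. 1 / Df p)"
  proof -
    have eq: "A = A1 \<union> A2" by (auto simp: A1_def A2_def)
    have "(\<Sum>p\<in>A1 \<union> A2. 1 / Df p) = (\<Sum>p\<in>A1. 1 / Df p) + (\<Sum>p\<in>A2. 1 / Df p)"
      using A by (intro sum.union_disjoint) (auto simp: A1_def A2_def)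
    then show ?thesis using eq by simp
  qed
  have s2: "(\<Sum>p\<in>A2. 1 / Df p) \<le> 2"
  proof -
    have "(\<Sum>p\<in>A2. 1 / Df p) \<le> (\<Sum>p\<in>A2. 2 / real (J+1))"
    proof (rule sum_mono)
      fix p assume "p \<in> A2"
      then have "j p \<ge> J + 1" by (auto simp: A2_def)
      then have "2 / real (j p) \<le> 2 / real (J+1)" by (intro divide_left_mono) auto
      then show "1 / Df p \<le> 2 / real (J+1)" using inv[of p] by linarith
    qed
    also have "\<dots> = real (card A2) * 2 / real (J+1)" by simp
    also have "\<dots> \<le> 2"
    proof -
      have "card A2 \<le> J" unfolding J_def A2_def using A by (intro card_mono) auto
      then show ?thesis by (simp add: field_simps)
    qed
    finally show ?thesis .
  qed
  have s1: "(\<Sum>p\<in>A1. 1 / Df p) \<le> 4 * R * H J"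
  proof -
    have fA1: "finite A1" using A by (simp add: A1_def)
    have "(\<Sum>p\<in>A1. 1 / Df p) \<le> (\<Sum>p\<in>A1. 2 / real (j p))" by (rule sum_mono) (rule inv)
    also have "\<dots> = (\<Sum>k\<in>{1..J}. \<Sum>p\<in>{p. p \<in> A1 \<and> j p = k}. 2 / real (j p))"
      by (rule sum.group[symmetric]) (use fA1 j1 in \<open>auto simp: A1_def\<close>)
    also have "\<dots> = (\<Sum>k\<in>{1..J}. real (card {p. p \<in> A1 \<and> j p = k}) * (2 / real k))"
      by (intro sum.cong refl) simp
    also have "\<dots> \<le> (\<Sum>k\<in>{1..J}. (2 * R) * (2 / real k))"
    proof (rule sum_mono)
      fix k assume k: "k \<in> {1..J}"
      define n1 where "n1 = \<lceil>c + real k / 2\<rceil>"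
      define n2 where "n2 = \<lfloor>c - real k / 2\<rfloor>"
      have sub: "{p. p \<in> A1 \<and> j p = k} \<subseteq> S2 n1 \<union> S2 n2"
      proof
        fix p assume p: "p \<in> {p. p \<in> A1 \<and> j p = k}"
        then have "real k \<le> 2 * Df p" "2 * Df p < real k + 1" using jle[of p] jgt[of p] by auto
        then have h: "real k \<le> 2 * \<bar>real_of_int (nsq p) - c\<bar>" "2 * \<bar>real_of_int (nsq p) - c\<bar> < real k + 1"
          unfolding Df_def by auto
        have "nsq p = n1 \<or> nsq p = n2"
        proof (cases "real_of_int (nsq p) \<ge> c")
          case True
          then have "real_of_int (nsq p) - 1 < c + real k / 2" "c + real k / 2 \<le> real_of_int (nsq p)" using h by auto
          then have "n1 = nsq p" unfolding n1_def by (rule ceiling_unique)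
          then show ?thesis by simp
        next
          case False
          then have "real_of_int (nsq p) \<le> c - real k / 2" "c - real k / 2 < real_of_int (nsq p) + 1" using h by auto
          then have "n2 = nsq p" unfolding n2_def by (rule floor_unique)
          then show ?thesis by simp
        qed
        then show "p \<in> S2 n1 \<union> S2 n2" by (cases p) (auto simp: S2_def nsq_def)
      qed
      have kJ: "real k \<le> real J" using k by simp
      have "real_of_int n1 \<le> c + real k / 2 + 1" unfolding n1_def by (rule of_int_ceiling_le_add_one)
      then have "real_of_int n1 \<le> c + real (card A) + 1" using kJ unfolding J_def by linarith
      then have r1: "real (card (S2 n1)) \<le> R" by (rule R)
      have "real_of_int n2 \<le> c - real k / 2" unfolding n2_def by (rule of_int_floor_le)
      then have "real_of_int n2 \<le> c + real (card A) + 1" by simp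
      then have r2: "real (card (S2 n2)) \<le> R" by (rule R)
      have "card {p. p \<in> A1 \<and> j p = k} \<le> card (S2 n1 \<union> S2 n2)"
        using sub S2_finite by (intro card_mono) auto
      also have "\<dots> \<le> card (S2 n1) + card (S2 n2)" by (rule card_Un_le)
      finally have "real (card {p. p \<in> A1 \<and> j p = k}) \<le> 2 * R" using r1 r2 by linarith
      then show "real (card {p. p \<in> A1 \<and> j p = k}) * (2 / real k) \<le> (2 * R) * (2 / real k)"
        by (rule mult_right_mono) simp
    qed
    also have "\<dots> = 4 * R * H J" by (simp add: H_def sum_distrib_left)
    finally show ?thesis .
  qed
  show ?thesis using split s1 s2 unfolding Df_def J_def by linarith
qed


lemma pnorm_sq: "(pnorm p)^2 = real_of_int (nsq p)"
  unfolding pnorm_def nsq_def by simp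

lemma pnorm_nonneg: "pnorm p \<ge> 0" unfolding pnorm_def by simp

lemma abs_le_pnorm: "\<bar>real_of_int (fst p)\<bar> \<le> pnorm p" "\<bar>real_of_int (snd p)\<bar> \<le> pnorm p"
proof -
  have "sqrt (real_of_int ((fst p)^2)) \<le> pnorm p" unfolding pnorm_def by (intro real_sqrt_le_mono) simp
  then show "\<bar>real_of_int (fst p)\<bar> \<le> pnorm p" by simp
  have "sqrt (real_of_int ((snd p)^2)) \<le> pnorm p" unfolding pnorm_def by (intro real_sqrt_le_mono) simp
  then show "\<bar>real_of_int (snd p)\<bar> \<le> pnorm p" by simp
qed

lemma le_box: assumes "\<And>p. p \<in> S \<Longrightarrow> pnorm p \<le> r"
  shows "S \<subseteq> {-\<lceil>r\<rceil>..\<lceil>r\<rceil>} \<times> {-\<lceil>r\<rceil>..\<lceil>r\<rceil>}"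
proof
  fix p assume p: "p \<in> S"
  have "\<bar>real_of_int (fst p)\<bar> \<le> r" "\<bar>real_of_int (snd p)\<bar> \<le> r" using abs_le_pnorm[of p] assms[OF p] by linarith+
  moreover have "r \<le> real_of_int \<lceil>r\<rceil>" by (rule le_of_int_ceiling)
  ultimately have "\<bar>real_of_int (fst p)\<bar> \<le> real_of_int \<lceil>r\<rceil>" "\<bar>real_of_int (snd p)\<bar> \<le> real_of_int \<lceil>r\<rceil>" by linarith+
  then have "\<bar>fst p\<bar> \<le> \<lceil>r\<rceil>" "\<bar>snd p\<bar> \<le> \<lceil>r\<rceil>" by linarith+
  then show "p \<in> {-\<lceil>r\<rceil>..\<lceil>r\<rceil>} \<times> {-\<lceil>r\<rceil>..\<lceil>r\<rceil>}" by (cases p) auto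
qed

lemma card_box: "real (card ({-M..M} \<times> {-M..M::int})) = (real_of_int (2*M+1))^2" if "M \<ge> 0"
  using that by (simp add: card_cartesian_product power2_eq_square)

lemma ball_finite: "finite (fermi_ball kF)"
proof -
  have "fermi_ball kF \<subseteq> {-\<lceil>kF\<rceil>..\<lceil>kF\<rceil>} \<times> {-\<lceil>kF\<rceil>..\<lceil>kF\<rceil>}"
    by (rule le_box) (auto simp: fermi_ball_def)
  then show ?thesis by (rule finite_subset) auto
qed

lemma N_lower: assumes kF: "kF > 0" shows "kF^2 \<le> 4 * real (NF kF)"
proof -
  define m where "m = \<lceil>kF/2\<rceil> - 1"
  have m0: "m \<ge> 0" using kF unfolding m_def by (simp add: le_ceiling_iff)
  have mlt: "real_of_int m < kF/2" unfolding m_def by linarith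
  have mge: "real_of_int m \<ge> kF/2 - 1" unfolding m_def by linarith
  have sub: "{-m..m} \<times> {-m..m} \<subseteq> fermi_ball kF"
  proof
    fix p assume "p \<in> {-m..m} \<times> {-m..m}"
    then have "\<bar>fst p\<bar> \<le> m" "\<bar>snd p\<bar> \<le> m" by auto
    then have a: "\<bar>real_of_int (fst p)\<bar> \<le> real_of_int m" "\<bar>real_of_int (snd p)\<bar> \<le> real_of_int m" by linarith+
    have "(real_of_int (fst p))^2 \<le> (real_of_int m)^2" using a(1) by (metis abs_le_square_iff abs_of_nonneg m0 of_int_0_le_iff)
    moreover have "(real_of_int (snd p))^2 \<le> (real_of_int m)^2" using a(2) by (metis abs_le_square_iff abs_of_nonneg m0 of_int_0_le_iff)
    moreover have "(real_of_int m)^2 < (kF/2)^2" using mlt m0 by (intro power_strict_mono) auto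
    moreover have "(real_of_int m)^2 \<ge> 0" by simp
    moreover have "(kF/2)^2 = kF^2/4" by (simp add: power_divide)
    moreover have "real_of_int (nsq p) = (real_of_int (fst p))^2 + (real_of_int (snd p))^2" by (simp add: nsq_def)
    ultimately have "real_of_int (nsq p) < kF^2" by linarith
    then have "(pnorm p)^2 < kF^2" by (simp add: pnorm_sq)
    then have "pnorm p < kF" using kF pnorm_nonneg[of p] by (simp add: power_less_imp_less_base)
    then show "p \<in> fermi_ball kF" by (simp add: fermi_ball_def)
  qed
  have "(real_of_int (2*m+1))^2 = real (card ({-m..m} \<times> {-m..m}))" using card_box m0 by simp
  also have "\<dots> \<le> real (NF kF)"
  proof -
    have "card ({-m..m} \<times> {-m..m}) \<le> card (fermi_ball kF)" using sub ball_finite by (intro card_mono) auto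
    then show ?thesis unfolding NF_def by (simp only: of_nat_le_iff)
  qed
  finally have c: "(real_of_int (2*m+1))^2 \<le> real (NF kF)" .
  have "kF/2 \<le> real_of_int (2*m+1)" using mge m0 by (cases "kF \<ge> 2") auto
  then have "(kF/2)^2 \<le> (real_of_int (2*m+1))^2" using kF by (intro power_mono) auto
  then show ?thesis using c by (simp add: power_divide)
qed

lemma J_upper: assumes kF: "kF > 0"
  shows "real (card {p. pnorm p \<le> 2 * kF}) \<le> 146 * real (NF kF)"
proof -
  define M where "M = \<lceil>2*kF\<rceil>"
  have M0: "M \<ge> 0" using kF unfolding M_def by simp
  have sub: "{p. pnorm p \<le> 2 * kF} \<subseteq> {-M..M} \<times> {-M..M}" unfolding M_def by (rule le_box) auto
  have "card {p. pnorm p \<le> 2 * kF} \<le> card ({-M..M} \<times> {-M..M})"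
    using sub by (intro card_mono) auto
  then have "real (card {p. pnorm p \<le> 2 * kF}) \<le> real (card ({-M..M} \<times> {-M..M}))"
    by (simp only: of_nat_le_iff)
  also have "\<dots> = (real_of_int (2*M+1))^2" using card_box M0 by simp
  also have "\<dots> \<le> (4*kF+3)^2"
  proof -
    have "real_of_int M \<le> 2*kF + 1" unfolding M_def by linarith
    then show ?thesis using M0 by (intro power_mono) auto
  qed
  also have "\<dots> \<le> 32 * kF^2 + 18"
  proof -
    have "(4*kF+3)^2 + (4*kF-3)^2 = 32*kF^2+18" by (simp add: power2_eq_square algebra_simps)
    moreover have "(4*kF-3)^2 \<ge> 0" by simp
    ultimately show ?thesis by linarith
  qed
  also have "\<dots> \<le> 146 * real (NF kF)"
  proof -
    have "kF^2 \<le> 4 * real (NF kF)" by (rule N_lower[OF kF])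
    moreover have "real (NF kF) \<ge> 1"
    proof -
      have "(0,0) \<in> fermi_ball kF" using kF by (simp add: fermi_ball_def pnorm_def)
      then have "card (fermi_ball kF) \<noteq> 0" using ball_finite by auto
      then show ?thesis by (simp add: NF_def)
    qed
    ultimately show ?thesis by linarith
  qed
  finally show ?thesis .
qed

lemma adm_gap: assumes adm: "admissible_kF kF"
  shows "\<bar>real_of_int (nsq p) - kF^2\<bar> \<ge> 1/2"
proof -
  have kF: "kF > 0" using adm by (simp add: admissible_kF_def)
  define Bl where "Bl = fermi_ball kF"
  define Vin where "Vin = (\<lambda>q. (pnorm q)^2) ` Bl"
  define Vout where "Vout = (\<lambda>q. (pnorm q)^2) ` (- Bl)"
  define a where "a = Inf Vout"
  define b where "b = Sup Vin"
  have eq: "kF^2 = (a + b) / 2" using adm unfolding admissible_kF_def a_def b_def Vin_def Vout_def Bl_def by simp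
  have zero: "(0,0) \<in> Bl" using kF by (simp add: Bl_def fermi_ball_def pnorm_def)
  have finV: "finite Vin" "Vin \<noteq> {}" unfolding Vin_def Bl_def using ball_finite zero[unfolded Bl_def] by auto
  have bmax: "b = Max Vin" unfolding b_def using finV by (rule cSup_eq_Max)
  then have "b \<in> Vin" using finV by simp
  then obtain q0 where q0: "q0 \<in> Bl" "b = (pnorm q0)^2" unfolding Vin_def by blast
  have bq: "b = real_of_int (nsq q0)" using q0 by (simp add: pnorm_sq)
  have "pnorm q0 < kF" using q0 by (simp add: Bl_def fermi_ball_def)
  then have blt: "b < kF^2" using q0 pnorm_nonneg[of q0] by (simp add: power_strict_mono)
  have out: "real_of_int (nsq p) \<ge> b + 1" if "p \<notin> Bl" for p
  proof -
    have "pnorm p \<ge> kF" using that by (simp add: Bl_def fermi_ball_def)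
    then have "(pnorm p)^2 \<ge> kF^2" using kF by (intro power_mono) auto
    then have "real_of_int (nsq p) > real_of_int (nsq q0)" using blt bq by (simp add: pnorm_sq)
    then have "nsq p \<ge> nsq q0 + 1" by linarith
    then show ?thesis using bq by linarith
  qed
  have ne: "Vout \<noteq> {}"
  proof -
    have "pnorm (\<lceil>kF\<rceil>, 0) \<ge> kF" using kF by (simp add: pnorm_def)
    then have "(\<lceil>kF\<rceil>, 0) \<notin> Bl" by (simp add: Bl_def fermi_ball_def)
    then show ?thesis unfolding Vout_def by auto
  qed
  have age: "a \<ge> b + 1" unfolding a_def
  proof (rule cInf_greatest[OF ne])
    fix x assume "x \<in> Vout"
    then obtain p where "p \<notin> Bl" "x = (pnorm p)^2" unfolding Vout_def by auto
    then show "b + 1 \<le> x" using out by (simp add: pnorm_sq)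
  qed
  show ?thesis
  proof (cases "p \<in> Bl")
    case True
    then have "(pnorm p)^2 \<in> Vin" unfolding Vin_def by auto
    then have "(pnorm p)^2 \<le> b" using bmax finV by simp
    then have "real_of_int (nsq p) \<le> b" by (simp add: pnorm_sq)
    then have h: "1/2 \<le> -(real_of_int (nsq p) - kF^2)" using eq age by simp
    have "-(real_of_int (nsq p) - kF^2) \<le> \<bar>real_of_int (nsq p) - kF^2\<bar>" by (rule abs_ge_minus_self)
    then show ?thesis using h by linarith
  next
    case False
    then have "(pnorm p)^2 \<in> Vout" unfolding Vout_def by auto
    moreover have "bdd_below Vout" unfolding Vout_def by (rule bdd_belowI[of _ 0]) auto
    ultimately have "a \<le> (pnorm p)^2" unfolding a_def by (rule cInf_lower)
    then have "real_of_int (nsq p) \<ge> a" by (simp add: pnorm_sq)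
    then have h: "1/2 \<le> real_of_int (nsq p) - kF^2" using eq age by simp
    have "real_of_int (nsq p) - kF^2 \<le> \<bar>real_of_int (nsq p) - kF^2\<bar>" by (rule abs_ge_self)
    then show ?thesis using h by linarith
  qed
qed

lemma S2_nonpos: assumes "n \<le> 0" shows "card (S2 n) \<le> 1"
proof -
  have "S2 n \<subseteq> {(0,0)}"
  proof
    fix p assume "p \<in> S2 n"
    then obtain x y where "p = (x,y)" "x^2 + y^2 = n" by (auto simp: S2_def)
    moreover have "x^2 \<ge> 0" "y^2 \<ge> 0" by simp_all
    ultimately have "x^2 = 0" "y^2 = 0" using assms by linarith+
    then show "p \<in> {(0,0)}" using \<open>p = (x,y)\<close> by simp
  qed
  then show ?thesis by (metis card.empty card.insert empty_iff finite.intros card_mono finite.emptyI One_nat_def)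
qed

theorem lemmaA3:
  fixes \<epsilon> :: real
  assumes "\<epsilon> > 0"
  shows "\<exists>C > 0. \<forall>kF (A :: (int \<times> int) set).
           admissible_kF kF \<and> finite A \<and> card A \<le> card {p. pnorm p \<le> 2 * kF} \<longrightarrow>
           (hbar kF)\<^sup>2 * (\<Sum>p\<in>A. inverse (e_kin kF p)) \<le> C * real (NF kF) powr \<epsilon>"
proof -
  define \<delta> where "\<delta> = min \<epsilon> 1 / 2"
  have d: "0 < \<delta>" "\<delta> \<le> 1" "2 * \<delta> \<le> \<epsilon>" using assms by (auto simp: \<delta>_def)
  obtain C2 where C2: "C2 \<ge> 1" "\<And>n::int. n > 0 \<Longrightarrow> real (card (S2 n)) \<le> C2 * real_of_int n powr \<delta>"
    using r2_asymp[OF d(1,2)] by blast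
  define C where "C = 2 + 604 * C2 * (1 + 146 / \<delta>)"
  show ?thesis
  proof (intro exI[of _ C] conjI allI impI)
    show "C > 0" unfolding C_def using C2 d by (simp add: add_pos_nonneg)
    fix kF and A :: "(int \<times> int) set"
    assume H0: "admissible_kF kF \<and> finite A \<and> card A \<le> card {p. pnorm p \<le> 2 * kF}"
    then have adm: "admissible_kF kF" and A: "finite A" and cA: "card A \<le> card {p. pnorm p \<le> 2 * kF}" by auto
    have kF: "kF > 0" using adm by (simp add: admissible_kF_def)
    define X where "X = real (NF kF)"
    have X1: "X \<ge> 1"
    proof -
      have "(0,0) \<in> fermi_ball kF" using kF by (simp add: fermi_ball_def pnorm_def)
      then have "card (fermi_ball kF) \<noteq> 0" using ball_finite by auto
      then show ?thesis by (simp add: X_def NF_def)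
    qed
    define c where "c = kF^2"
    have c4: "c \<le> 4 * X" unfolding c_def X_def by (rule N_lower[OF kF])
    have J: "real (card A) \<le> 146 * X" using J_upper[OF kF] cA unfolding X_def
      by (meson of_nat_le_iff order_trans)
    define R where "R = C2 * (151 * X) powr \<delta>"
    have Rn: "real (card (S2 n)) \<le> R" if "real_of_int n \<le> c + real (card A) + 1" for n :: int
    proof (cases "n > 0")
      case True
      have "real (card (S2 n)) \<le> C2 * real_of_int n powr \<delta>" by (rule C2(2)[OF True])
      also have "\<dots> \<le> C2 * (151 * X) powr \<delta>"
      proof -
        have "real_of_int n \<le> 151 * X" using that c4 J X1 by linarith
        then have "real_of_int n powr \<delta> \<le> (151 * X) powr \<delta>" using True d by (intro powr_mono2) auto
        then show ?thesis using C2 by simp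
      qed
      finally show ?thesis unfolding R_def .
    next
      case False
      then have "real (card (S2 n)) \<le> 1" using S2_nonpos by simp
      also have "1 \<le> R"
      proof -
        have "1 \<le> (151 * X) powr \<delta>" using X1 d by (intro ge_one_powr_ge_zero) auto
        then show ?thesis unfolding R_def using C2 by (metis mult_mono' mult.right_neutral zero_le_one order_trans)
      qed
      finally show ?thesis .
    qed
    have hb: "hbar kF > 0" unfolding hbar_def using X1 by (simp add: X_def)
    have sumeq: "(hbar kF)\<^sup>2 * (\<Sum>p\<in>A. inverse (e_kin kF p)) = (\<Sum>p\<in>A. 1 / \<bar>real_of_int (nsq p) - c\<bar>)"
    proof -
      have "(hbar kF)\<^sup>2 * (\<Sum>p\<in>A. inverse (e_kin kF p)) = (\<Sum>p\<in>A. (hbar kF)\<^sup>2 * inverse (e_kin kF p))"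
        by (simp add: sum_distrib_left)
      also have "\<dots> = (\<Sum>p\<in>A. 1 / \<bar>real_of_int (nsq p) - c\<bar>)"
        using hb by (intro sum.cong refl) (simp add: e_kin_def pnorm_sq c_def field_simps)
      finally show ?thesis .
    qed
    have main: "(\<Sum>p\<in>A. 1 / \<bar>real_of_int (nsq p) - c\<bar>) \<le> 2 + 4 * R * H (card A)"
      by (rule sum_bound[OF A]) (use adm_gap[OF adm] Rn in \<open>auto simp: c_def\<close>)
    have Xd: "X powr \<delta> \<ge> 1" using X1 d by (intro ge_one_powr_ge_zero) auto
    have HJ: "H (card A) \<le> (1 + 146/\<delta>) * X powr \<delta>"
    proof -
      have "H (card A) \<le> 1 + real (card A) powr \<delta> / \<delta>" by (rule H_pow[OF d(1)])
      also have "real (card A) powr \<delta> \<le> (146 * X) powr \<delta>" using J d by (intro powr_mono2) auto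
      also have "(146 * X) powr \<delta> = 146 powr \<delta> * X powr \<delta>" using X1 by (simp add: powr_mult)
      also have "146 powr \<delta> \<le> (146::real)"
        using d by (metis powr_mono powr_one one_le_numeral zero_less_numeral not_le order.strict_iff_not)
      finally have "H (card A) \<le> 1 + 146 * X powr \<delta> / \<delta>" using d Xd by (simp add: divide_right_mono mult_right_mono)
      also have "\<dots> \<le> (1 + 146/\<delta>) * X powr \<delta>" using Xd by (simp add: algebra_simps)
      finally show ?thesis .
    qed
    have RX: "R \<le> 151 * C2 * X powr \<delta>"
    proof -
      have "(151 * X) powr \<delta> = 151 powr \<delta> * X powr \<delta>" using X1 by (simp add: powr_mult)
      moreover have "151 powr \<delta> \<le> (151::real)"
        using d by (metis powr_mono powr_one one_le_numeral zero_less_numeral not_le order.strict_iff_not)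
      ultimately have "(151 * X) powr \<delta> \<le> 151 * X powr \<delta>" using Xd by (simp add: mult_right_mono)
      then show ?thesis unfolding R_def using C2 by (simp add: mult_left_mono)
    qed
    have "4 * R * H (card A) \<le> 4 * (151 * C2 * X powr \<delta>) * ((1 + 146/\<delta>) * X powr \<delta>)"
    proof -
      have R0: "R \<ge> 0" unfolding R_def using C2 by simp
      have H0: "H (card A) \<ge> 0" unfolding H_def by (intro sum_nonneg) auto
      show ?thesis using RX HJ R0 H0 by (intro mult_mono) auto
    qed
    also have "\<dots> = 604 * C2 * (1 + 146/\<delta>) * (X powr \<delta> * X powr \<delta>)" by (simp add: algebra_simps)
    also have "X powr \<delta> * X powr \<delta> = X powr (2*\<delta>)" by (simp add: powr_add[symmetric])
    also have "X powr (2*\<delta>) \<le> X powr \<epsilon>" using X1 d by (intro powr_mono) auto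
    finally have "4 * R * H (card A) \<le> 604 * C2 * (1 + 146/\<delta>) * X powr \<epsilon>"
      using C2 d by (simp add: mult_left_mono)
    moreover have "1 \<le> X powr \<epsilon>" using X1 assms by (intro ge_one_powr_ge_zero) auto
    ultimately have "2 + 4 * R * H (card A) \<le> C * X powr \<epsilon>" unfolding C_def by (simp add: algebra_simps)
    then show "(hbar kF)\<^sup>2 * (\<Sum>p\<in>A. inverse (e_kin kF p)) \<le> C * real (NF kF) powr \<epsilon>"
      using sumeq main unfolding X_def by linarith
  qed
qed

end
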